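(* Let $\mathcal{X}$ be a nonempty open convex subset of $\mathbb{R}^n$ and let $\textbf{F}:\mathcal{X}\to I(\mathbb{R})$ be $gH$-differentiable on $\mathcal{X}$. If $\textbf{F}$ is convex on $\mathcal{X}$, then \[(y-x)^T\odot\nabla\textbf{F}(x)\preceq\textbf{F}(y)\ominus_{gH}\textbf{F}(x)\quad\text{for all }x,y\in\mathcal{X}.\]
   Context: $I(\mathbb{R})$: closed bounded intervals $\textbf{A}=[\underline{a},\overline{a}]$ with Moore arithmetic ($\oplus$ endpointwise; $\lambda\odot\textbf{A}=[\lambda\underline{a},\lambda\overline{a}]$ if $\lambda\ge0$, $[\lambda\overline{a},\lambda\underline{a}]$ if $\lambda<0$); $gH$-difference $\textbf{A}\ominus_{gH}\textbf{B}=[\min\{\underline{a}-\underline{b},\overline{a}-\overline{b}\},\max\{\underline{a}-\underline{b},\overline{a}-\overline{b}\}]$; limits in the norm $\max\{|\underline{a}|,|\overline{a}|\}$. $\textbf{A}\preceq\textbf{B}$ iff $\underline{a}\le\underline{b}$ and $\overline{a}\le\overline{b}$. An IVF is $\textbf{F}(x)=[\underline{f}(x),\overline{f}(x)]$. $D_i\textbf{F}(x)=\lim_{h\to0}\frac1h\odot(\textbf{F}(x+he_i)\ominus_{gH}\textbf{F}(x))$, $\nabla\textbf{F}(x)=(D_1\textbf{F}(x),\dots,D_n\textbf{F}(x))^T$, $d^T\odot\nabla\textbf{F}(x)=\bigoplus_i d_i\odot D_i\textbf{F}(x)$. Linear IVF: $\textbf{L}(x)=\bigoplus_i x_i\odot\textbf{L}(e_i)$.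 $\textbf{F}$ is $gH$-differentiable at $\bar{x}$ if there exist a linear IVF $\textbf{L}_{\bar{x}}$, an IVF $\textbf{E}(\textbf{F}(\bar{x});d)$ and $\delta>0$ with $(\textbf{F}(\bar{x}+d)\ominus_{gH}\textbf{F}(\bar{x}))\ominus_{gH}\textbf{L}_{\bar{x}}(d)=\lVert d\rVert\odot\textbf{E}(\textbf{F}(\bar{x});d)$ for $\lVert d\rVert<\delta$ and $\textbf{E}\to\textbf{0}$ as $\lVert d\rVert\to0$; on $\mathcal{X}$ means at every point. $\textbf{F}$ is convex if $\textbf{F}(\lambda x_1+(1-\lambda)x_2)\preceq\lambda\odot\textbf{F}(x_1)\oplus(1-\lambda)\odot\textbf{F}(x_2)$ for all $x_1,x_2\in\mathcal{X}$, $\lambda\in[0,1]$. *)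

theory Defs
  imports "HOL-Analysis.Analysis"
begin

text \<open>Closed bounded intervals are represented as pairs (lower, upper) of reals
  with lower \<le> upper. The topology on real \<times> real is the product topology,
  which coincides with the one induced by the norm max(|lo|,|up|).
  Moore addition is the componentwise addition of pairs.\<close>

type_synonym ival = "real \<times> real"

definition is_ival :: "ival \<Rightarrow> bool" where
  "is_ival A \<longleftrightarrow> fst A \<le> snd A"

definition ival_scale :: "real \<Rightarrow> ival \<Rightarrow> ival" where
  "ival_scale l A = (if l \<ge> 0 then (l * fst A, l * snd A) else (l * snd A, l * fst A))"

definition gH_diff :: "ival \<Rightarrow> ival \<Rightarrow> ival" where
  "gH_diff A B = (min (fst A - fst B) (snd A - snd B), max (fst A - fst B) (snd A - snd B))"

definition ival_le :: "ival \<Rightarrow> ival \<Rightarrow> bool" where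
  "ival_le A B \<longleftrightarrow> fst A \<le> fst B \<and> snd A \<le> snd B"

definition gH_partial :: "(real^'n \<Rightarrow> ival) \<Rightarrow> real^'n \<Rightarrow> 'n \<Rightarrow> ival" where
  "gH_partial F x i =
     Lim (at 0) (\<lambda>h. ival_scale (1 / h) (gH_diff (F (x + h *\<^sub>R axis i 1)) (F x)))"

text \<open>d^T \<odot> grad F(x) = Moore sum over i of d_i \<odot> D_i F(x).\<close>
definition gH_grad_dir :: "(real^'n \<Rightarrow> ival) \<Rightarrow> real^'n \<Rightarrow> real^'n \<Rightarrow> ival" where
  "gH_grad_dir F x d = (\<Sum>i\<in>UNIV. ival_scale (d $ i) (gH_partial F x i))"

definition lin_ivf :: "('n::finite \<Rightarrow> ival) \<Rightarrow> real^'n \<Rightarrow> ival" where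
  "lin_ivf c d = (\<Sum>i\<in>UNIV. ival_scale (d $ i) (c i))"

definition gH_differentiable_at :: "(real^'n::finite \<Rightarrow> ival) \<Rightarrow> real^'n \<Rightarrow> bool" where
  "gH_differentiable_at F x \<longleftrightarrow>
     (\<exists>c E \<delta>. (\<forall>i. is_ival (c i)) \<and> (\<forall>d. is_ival (E d)) \<and> \<delta> > 0 \<and>
        (\<forall>d. norm d < \<delta> \<longrightarrow>
            gH_diff (gH_diff (F (x + d)) (F x)) (lin_ivf c d) = ival_scale (norm d) (E d)) \<and>
        (E \<longlongrightarrow> (0, 0)) (at 0))"

definition gH_differentiable_on :: "(real^'n::finite \<Rightarrow> ival) \<Rightarrow> (real^'n) set \<Rightarrow> bool" where
  "gH_differentiable_on F X \<longleftrightarrow> (\<forall>x\<in>X. gH_differentiable_at F x)"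

definition ivf_convex_on :: "(real^'n::finite) set \<Rightarrow> (real^'n \<Rightarrow> ival) \<Rightarrow> bool" where
  "ivf_convex_on X F \<longleftrightarrow>
     (\<forall>x1\<in>X. \<forall>x2\<in>X. \<forall>l::real. 0 \<le> l \<and> l \<le> 1 \<longrightarrow>
        ival_le (F (l *\<^sub>R x1 + (1 - l) *\<^sub>R x2))
                (ival_scale l (F x1) + ival_scale (1 - l) (F x2)))"

end

theory Submission
  imports Defs
begin

lemma abs_fst_le: "\<bar>fst (E::real\<times>real)\<bar> \<le> norm E"
  by (metis norm_fst_le prod.collapse real_norm_def)

lemma abs_snd_le: "\<bar>snd (E::real\<times>real)\<bar> \<le> norm E"
  by (metis norm_snd_le prod.collapse real_norm_def)

lemma norm_pair_abs: "norm (E::real\<times>real) \<le> \<bar>fst E\<bar> + \<bar>snd E\<bar>"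
  by (metis norm_Pair_le prod.collapse real_norm_def)

lemma gh_bound:
  assumes "gH_diff A B = ival_scale r E" "r \<ge> 0"
  shows "\<bar>fst A - fst B\<bar> \<le> r * norm E \<and> \<bar>snd A - snd B\<bar> \<le> r * norm E"
proof -
  have e: "min (fst A - fst B) (snd A - snd B) = r * fst E"
          "max (fst A - fst B) (snd A - snd B) = r * snd E"
    using assms unfolding gH_diff_def ival_scale_def by auto
  have "\<bar>r * fst E\<bar> \<le> r * norm E" "\<bar>r * snd E\<bar> \<le> r * norm E"
    using assms(2) abs_fst_le[of E] abs_snd_le[of E]
    by (auto simp: abs_mult intro: mult_left_mono)
  then show ?thesis using e by (smt (verit))
qed

lemma ival_scale_mult:
  assumes "t \<ge> 0" shows "ival_scale (t * a) C = t *\<^sub>R ival_scale a C"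
  using assms unfolding ival_scale_def
  by (auto simp: mult_le_0_iff zero_le_mult_iff zero_prod_def)

lemma lin_ivf_scale:
  assumes "t \<ge> 0" shows "lin_ivf c (t *\<^sub>R v) = t *\<^sub>R lin_ivf c v"
  unfolding lin_ivf_def using ival_scale_mult[OF assms]
  by (simp add: scaleR_sum_right)

lemma ival_scale_zero: "ival_scale 0 C = (0,0)"
  unfolding ival_scale_def by simp

lemma lin_ivf_axis: "lin_ivf c (h *\<^sub>R axis i 1) = ival_scale h (c i)"
proof -
  have "lin_ivf c (h *\<^sub>R axis i 1) = (\<Sum>j\<in>UNIV. if j = i then ival_scale h (c i) else 0)"
    unfolding lin_ivf_def
    by (rule sum.cong) (auto simp: axis_def ival_scale_zero zero_prod_def)
  then show ?thesis by simp
qed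

lemma ival_scale_inv: "h \<noteq> 0 \<Longrightarrow> ival_scale (1/h) (ival_scale h C) = C"
  unfolding ival_scale_def by auto

lemma ival_scale_diff: "ival_scale l A - ival_scale l B = ival_scale l (A - B)"
  unfolding ival_scale_def by (auto simp: right_diff_distrib)

lemma norm_ival_scale: "norm (ival_scale l A) = \<bar>l\<bar> * norm A"
proof -
  have "norm (ival_scale l A) = sqrt ((l * fst A)^2 + (l * snd A)^2)"
    unfolding ival_scale_def by (auto simp: norm_Pair)
  also have "\<dots> = \<bar>l\<bar> * norm A"
    by (simp add: norm_prod_def power_mult_distrib real_sqrt_mult flip: distrib_left)
  finally show ?thesis .
qed

lemma partial_eq:
  fixes F :: "real^'n::finite \<Rightarrow> real \<times> real"
  assumes nd: "\<forall>d. norm d < \<delta> \<longrightarrow>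
            gH_diff (gH_diff (F (x + d)) (F x)) (lin_ivf c d) = ival_scale (norm d) (E d)"
    and dp: "\<delta> > 0" and El: "(E \<longlongrightarrow> (0, 0)) (at 0)"
  shows "gH_partial F x i = c i"
proof -
  let ?Q = "\<lambda>h. ival_scale (1 / h) (gH_diff (F (x + h *\<^sub>R axis i 1)) (F x))"
  have "?Q \<midarrow>0\<rightarrow> c i"
    unfolding LIM_eq
  proof (intro allI impI)
    fix r :: real assume r: "r > 0"
    from El obtain s where s: "s > 0" and
      sE: "\<And>d. d \<noteq> 0 \<and> norm (d - 0) < s \<Longrightarrow> norm (E d - (0,0)) < r/2"
      unfolding LIM_eq using r by (meson half_gt_zero)
    show "\<exists>s>0. \<forall>h. h \<noteq> 0 \<and> norm (h - 0) < s \<longrightarrow> norm (?Q h - c i) < r"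
    proof (intro exI[of _ "min s \<delta>"] conjI allI impI)
      show "min s \<delta> > 0" using s dp by simp
      fix h :: real assume h: "h \<noteq> 0 \<and> norm (h - 0) < min s \<delta>"
      define d where "d = h *\<^sub>R axis i (1::real)"
      have nd': "norm d = \<bar>h\<bar>" unfolding d_def by simp
      define C where "C = gH_diff (F (x + d)) (F x)"
      define D where "D = ival_scale h (c i)"
      have "gH_diff C D = ival_scale (norm d) (E d)"
        using nd[rule_format, of d] h nd' unfolding C_def D_def d_def
        by (simp add: lin_ivf_axis)
      from gh_bound[OF this] have b: "\<bar>fst C - fst D\<bar> \<le> \<bar>h\<bar> * norm (E d)"
        "\<bar>snd C - snd D\<bar> \<le> \<bar>h\<bar> * norm (E d)" using nd' by auto
      have Ed: "norm (E d) < r/2" using sE[of d] h nd' by (simp add: d_def flip: zero_prod_def)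
      have "?Q h - c i = ival_scale (1/h) C - ival_scale (1/h) D"
        using h by (simp add: C_def D_def d_def ival_scale_inv)
      also have "\<dots> = ival_scale (1/h) (C - D)" by (rule ival_scale_diff)
      finally have "norm (?Q h - c i) = \<bar>1/h\<bar> * norm (C - D)"
        by (simp add: norm_ival_scale)
      also have "\<dots> \<le> \<bar>1/h\<bar> * (\<bar>fst C - fst D\<bar> + \<bar>snd C - snd D\<bar>)"
        using norm_pair_abs[of "C - D"] by (intro mult_left_mono) auto
      also have "\<dots> \<le> \<bar>1/h\<bar> * (2 * \<bar>h\<bar> * norm (E d))"
        using b by (intro mult_left_mono) auto
      also have "\<dots> = 2 * norm (E d)" using h by (simp add: abs_mult field_simps)
      also have "\<dots> < r" using Ed by simp
      finally show "norm (?Q h - c i) < r" .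
    qed
  qed
  then show ?thesis unfolding gH_partial_def
    by (intro tendsto_Lim) (auto simp: trivial_limit_at)
qed


lemma lim_le:
  fixes E :: "real^'n::finite \<Rightarrow> real \<times> real"
  assumes H: "\<And>t. 0 < t \<Longrightarrow> t \<le> 1 \<Longrightarrow> t * norm v < \<delta> \<Longrightarrow> a \<le> b + norm v * norm (E (t *\<^sub>R v))"
    and dp: "\<delta> > 0" and El: "(E \<longlongrightarrow> (0, 0)) (at 0)"
  shows "a \<le> b"
proof (cases "v = 0")
  case True
  then show ?thesis using H[of "min 1 (\<delta>/2)"] dp by simp
next
  case False
  then have nv: "norm v > 0" by simp
  show ?thesis
  proof (rule ccontr)
    assume "\<not> a \<le> b"
    then have r: "(a - b) / norm v > 0" using nv by simp
    from El obtain s where s: "s > 0" and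
      sE: "\<And>d. d \<noteq> 0 \<and> norm (d - 0) < s \<Longrightarrow> norm (E d - (0,0)) < (a - b) / norm v"
      unfolding LIM_eq using r by meson
    define t where "t = min (1/2) (min s \<delta> / (2 * norm v))"
    have t0: "t > 0" using s dp nv by (simp add: t_def)
    have t1: "t \<le> 1" by (simp add: t_def)
    have "t \<le> min s \<delta> / (2 * norm v)" by (simp add: t_def)
    then have "t * norm v \<le> min s \<delta> / (2 * norm v) * norm v"
      by (rule mult_right_mono) simp
    then have "t * norm v \<le> min s \<delta> / 2" using nv by simp
    then have ts: "t * norm v < s" "t * norm v < \<delta>" using s dp by auto
    have "norm (E (t *\<^sub>R v)) < (a - b) / norm v"
      using sE[of "t *\<^sub>R v"] t0 False ts by (simp flip: zero_prod_def)
    then have "norm v * norm (E (t *\<^sub>R v)) < a - b" using nv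
      by (simp add: field_simps)
    moreover have "a \<le> b + norm v * norm (E (t *\<^sub>R v))" using H t0 t1 ts by auto
    ultimately show False by simp
  qed
qed


lemma step_bound:
  fixes F :: "real^'n::finite \<Rightarrow> real \<times> real"
  assumes nd: "\<forall>d. norm d < \<delta> \<longrightarrow>
            gH_diff (gH_diff (F (x + d)) (F x)) (lin_ivf c d) = ival_scale (norm d) (E d)"
    and cv: "ivf_convex_on X F" and X: "convex X" and xy: "x \<in> X" "y \<in> X"
    and t: "0 < t" "t \<le> 1" "t * norm (y - x) < \<delta>"
  shows "fst (lin_ivf c (y - x)) \<le> fst (gH_diff (F y) (F x)) + norm (y - x) * norm (E (t *\<^sub>R (y - x)))
       \<and> snd (lin_ivf c (y - x)) \<le> snd (gH_diff (F y) (F x)) + norm (y - x) * norm (E (t *\<^sub>R (y - x)))"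
proof -
  define v where "v = y - x"
  define z where "z = x + t *\<^sub>R v"
  have zeq: "t *\<^sub>R y + (1 - t) *\<^sub>R x = z" unfolding z_def v_def by (simp add: algebra_simps)
  have "ival_le (F (t *\<^sub>R y + (1 - t) *\<^sub>R x)) (ival_scale t (F y) + ival_scale (1 - t) (F x))"
    using cv xy t unfolding ivf_convex_on_def by auto
  then have c1: "fst (F z) \<le> t * fst (F y) + (1 - t) * fst (F x)"
    and c2: "snd (F z) \<le> t * snd (F y) + (1 - t) * snd (F x)"
    using t unfolding zeq ival_le_def ival_scale_def by auto
  define D1 where "D1 = fst (F z) - fst (F x)"
  define D2 where "D2 = snd (F z) - snd (F x)"
  define G1 where "G1 = fst (F y) - fst (F x)"
  define G2 where "G2 = snd (F y) - snd (F x)"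
  have d1: "D1 \<le> t * G1" using c1 unfolding D1_def G1_def by (simp add: algebra_simps)
  have d2: "D2 \<le> t * G2" using c2 unfolding D2_def G2_def by (simp add: algebra_simps)
  let ?L = "lin_ivf c v"
  let ?e = "norm (E (t *\<^sub>R v))"
  have nt: "norm (t *\<^sub>R v) = t * norm v" using t by simp
  have "gH_diff (gH_diff (F z) (F x)) (t *\<^sub>R ?L) = ival_scale (t * norm v) (E (t *\<^sub>R v))"
    using nd[rule_format, of "t *\<^sub>R v"] t nt lin_ivf_scale[of t c v]
    unfolding z_def v_def by simp
  from gh_bound[OF this] t have b:
    "\<bar>min D1 D2 - t * fst ?L\<bar> \<le> t * norm v * ?e"
    "\<bar>max D1 D2 - t * snd ?L\<bar> \<le> t * norm v * ?e"
    unfolding gH_diff_def D1_def D2_def by auto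
  have m1: "min D1 D2 \<le> t * min G1 G2" using d1 d2 t by (auto simp add: min_mult_distrib_left)
  have m2: "max D1 D2 \<le> t * max G1 G2" using d1 d2 t by (auto simp add: max_mult_distrib_left)
  have "t * (min G1 G2 + norm v * ?e) = t * min G1 G2 + t * norm v * ?e"
    by (simp add: algebra_simps)
  then have "t * fst ?L \<le> t * (min G1 G2 + norm v * ?e)" using b(1) m1 by linarith
  then have r1: "fst ?L \<le> min G1 G2 + norm v * ?e" using t by simp
  have "t * (max G1 G2 + norm v * ?e) = t * max G1 G2 + t * norm v * ?e"
    by (simp add: algebra_simps)
  then have "t * snd ?L \<le> t * (max G1 G2 + norm v * ?e)" using b(2) m2 by linarith
  then have r2: "snd ?L \<le> max G1 G2 + norm v * ?e" using t by simp
  show ?thesis using r1 r2 unfolding v_def G1_def G2_def gH_diff_def by simp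
qed

theorem theorem3p3:
  fixes X :: "(real^'n::finite) set" and F :: "real^'n \<Rightarrow> real \<times> real"
  assumes "X \<noteq> {}" and "open X" and "convex X"
    and "\<forall>x\<in>X. is_ival (F x)"
    and "gH_differentiable_on F X"
    and "ivf_convex_on X F"
  shows "\<forall>x\<in>X. \<forall>y\<in>X. ival_le (gH_grad_dir F x (y - x)) (gH_diff (F y) (F x))"
proof (intro ballI)
  fix x y assume x: "x \<in> X" and y: "y \<in> X"
  from assms(5) x obtain c E \<delta> where dp: "\<delta> > 0" and
    nd: "\<forall>d. norm d < \<delta> \<longrightarrow>
            gH_diff (gH_diff (F (x + d)) (F x)) (lin_ivf c d) = ival_scale (norm d) (E d)"
    and El: "(E \<longlongrightarrow> (0, 0)) (at 0)"
    unfolding gH_differentiable_on_def gH_differentiable_at_def by blast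
  have pe: "gH_partial F x i = c i" for i by (rule partial_eq[OF nd dp El])
  have gd: "gH_grad_dir F x (y - x) = lin_ivf c (y - x)"
    unfolding gH_grad_dir_def lin_ivf_def pe ..
  note sb = step_bound[OF nd assms(6) assms(3) x y]
  have "fst (lin_ivf c (y - x)) \<le> fst (gH_diff (F y) (F x))"
    by (rule lim_le[OF _ dp El]) (use sb in blast)
  moreover have "snd (lin_ivf c (y - x)) \<le> snd (gH_diff (F y) (F x))"
    by (rule lim_le[OF _ dp El]) (use sb in blast)
  ultimately show "ival_le (gH_grad_dir F x (y - x)) (gH_diff (F y) (F x))"
    unfolding gd ival_le_def by simp
qed

end
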